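(* For every $\lambda\in P^+$ and every $\mathbf i\in\mathbb N^r\times\mathbb N^r$, $$W(\lambda)^{\ge\mathbf i}=U(\mathfrak n^-[t])^{\ge\mathbf i}\,w_\lambda,\qquad W(\lambda)^{>\mathbf i}=U(\mathfrak n^-[t])^{>\mathbf i}\,w_\lambda.$$
   Context: $\mathfrak g=\mathfrak{sl}_{r+1}(\mathbb C)$, $r\ge2$, $x^+_{i,j}=E_{i,j+1}$, $x^-_{i,j}=E_{j+1,i}$, $\mathfrak n^\pm=\bigoplus\mathbb Cx^\pm_{i,j}$; $\mathfrak g_{r-1}\cong\mathfrak{sl}_r$ the subalgebra generated by $x^\pm_{i,j}$, $1\le i\le j\le r-1$, $\mathfrak n^-_{r-1}=\bigoplus_{1\le i\le j\le r-1}\mathbb Cx^-_{i,j}$; $\mathfrak a[t]=\mathfrak a\otimes\mathbb C[t]$. Weyl module $W(\lambda)$: generated by $w_\lambda$ with $\mathfrak n^+[t]w_\lambda=0$, $(\mathfrak h\otimes t\mathbb C[t])w_\lambda=0$, $hw_\lambda=\lambda(h)w_\lambda$, $(x^-_{i,i})^{m_i+1}w_\lambda=0$. $\mathbf F$: pairs $(\ell,\mathbf s)$, $\mathbf s=(\mathbf s(1)\le\dots\le\mathbf s(\ell))\in\mathbb N^\ell$, $|\mathbf s|=\sum\mathbf s(p)$; $\underline{\mathbf x}^-_r(\underline\ell,\underline{\mathbf s})=\prod_{i=1}^r\prod_p(x^-_{i,r}\otimes t^{\mathbf s_i(p)})$ (product over $i$ in increasing order), $|\underline{\mathbf s}|=(|\mathbf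 s_1|,..,|\mathbf s_r|)$. Order on $\mathbb N^r\times\mathbb N^r$: $(\underline\ell,\underline d)>(\underline\ell',\underline d')$ iff the first $s$ with $\ell_s\neq\ell'_s$ has $\ell_s<\ell'_s$, or $\underline\ell=\underline\ell'$ and the last $s$ with $d_s\ne d'_s$ has $d_s>d'_s$. Definitions: $W(\lambda)^{\ge\mathbf i}=\sum_{(\underline\ell,|\underline{\mathbf s}|)\ge\mathbf i}U(\mathfrak g_{r-1}[t])\underline{\mathbf x}^-_r(\underline\ell,\underline{\mathbf s})w_\lambda$, $U(\mathfrak n^-[t])^{\ge\mathbf i}=\sum_{(\underline\ell,|\underline{\mathbf s}|)\ge\mathbf i}U(\mathfrak n^-_{r-1}[t])\underline{\mathbf x}^-_r(\underline\ell,\underline{\mathbf s})$ (sums over $(\underline\ell,\underline{\mathbf s})\in\mathbf F^r$), and similarly with $>$ in place of $\ge$. *)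

theory Defs
  imports Complex_Main
begin

text \<open>
  A letter (a,b,k) stands for E_{a,b} (x) t^k in gl_{r+1}[t] (indices 1..r+1).
  Elements of the free associative algebra F over these letters are functions
  gen list => complex (only finitely supported ones are ever generated);
  multiplication is the concatenation (Cauchy) product.
  U(sl_{r+1}[t]) = F / I, where I is the two-sided ideal generated by
   - the commutator relations of gl_{r+1}[t],
   - the central elements  sum_a E_{a,a} (x) t^k  (so U(gl[t])/(z_k) = U(sl[t])),
   - the letters with indices outside 1..r+1.
  W(lambda) = F / (I + left ideal generated by the Weyl relations); a subspace
  X w_lambda of W(lambda) is represented by its preimage X + ideal in F.
\<close>

type_synonym gen = "nat \<times> nat \<times> nat"
type_synonym fa = "gen list \<Rightarrow> complex"

definition word :: "gen list \<Rightarrow> fa" where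
  "word u = (\<lambda>v. if v = u then 1 else 0)"

definition letter :: "gen \<Rightarrow> fa" where
  "letter g = word [g]"

definition fa_zero :: fa where "fa_zero = (\<lambda>_. 0)"
definition fa_add :: "fa \<Rightarrow> fa \<Rightarrow> fa" where "fa_add p q = (\<lambda>w. p w + q w)"
definition fa_smult :: "complex \<Rightarrow> fa \<Rightarrow> fa" where "fa_smult c p = (\<lambda>w. c * p w)"
definition fa_sub :: "fa \<Rightarrow> fa \<Rightarrow> fa" where "fa_sub p q = (\<lambda>w. p w - q w)"

definition fa_mult :: "fa \<Rightarrow> fa \<Rightarrow> fa" where
  "fa_mult p q = (\<lambda>w. \<Sum>i\<le>length w. p (take i w) * q (drop i w))"

definition fa_prod :: "fa list \<Rightarrow> fa" where
  "fa_prod xs = foldr fa_mult xs (word [])"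

inductive_set lspan :: "fa set \<Rightarrow> fa set" for S where
  lspan_zero: "fa_zero \<in> lspan S"
| lspan_gen: "p \<in> S \<Longrightarrow> p \<in> lspan S"
| lspan_add: "p \<in> lspan S \<Longrightarrow> q \<in> lspan S \<Longrightarrow> fa_add p q \<in> lspan S"
| lspan_smult: "p \<in> lspan S \<Longrightarrow> fa_smult c p \<in> lspan S"

definition valid_gen :: "nat \<Rightarrow> gen \<Rightarrow> bool" where
  "valid_gen r g = (case g of (a, b, k) \<Rightarrow> 1 \<le> a \<and> a \<le> r + 1 \<and> 1 \<le> b \<and> b \<le> r + 1)"

definition bracket :: "gen \<Rightarrow> gen \<Rightarrow> fa" where
  "bracket g1 g2 = (case g1 of (a, b, k) \<Rightarrow> case g2 of (c, d, l) \<Rightarrow>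
     fa_sub (if b = c then letter (a, d, k + l) else fa_zero)
            (if d = a then letter (c, b, k + l) else fa_zero))"

definition two_sided_gens :: "nat \<Rightarrow> fa set" where
  "two_sided_gens r =
     {fa_sub (fa_sub (fa_mult (letter g1) (letter g2)) (fa_mult (letter g2) (letter g1)))
             (bracket g1 g2) | g1 g2. valid_gen r g1 \<and> valid_gen r g2}
   \<union> {(\<lambda>w. \<Sum>a\<in>{1..r+1}. letter (a, a, k) w) | k. True}
   \<union> {letter g | g. \<not> valid_gen r g}"

definition hgen :: "nat \<Rightarrow> nat \<Rightarrow> fa" where
  "hgen i k = fa_sub (letter (i, i, k)) (letter (i + 1, i + 1, k))"

definition w_lambda :: fa where "w_lambda = word []"

text \<open>Defining relations of W(lambda), lambda = sum_i m_i omega_i, acting on w_lambda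
  (x^-_{i,i} = E_{i+1,i}, x^+_{i,j} = E_{i,j+1}).\<close>
definition weyl_left_gens :: "nat \<Rightarrow> (nat \<Rightarrow> nat) \<Rightarrow> fa set" where
  "weyl_left_gens r m =
     {letter (a, b, k) | a b k. 1 \<le> a \<and> a < b \<and> b \<le> r + 1}
   \<union> {hgen i k | i k. 1 \<le> i \<and> i \<le> r \<and> 1 \<le> k}
   \<union> {fa_sub (hgen i 0) (fa_smult (of_nat (m i)) (word [])) | i. 1 \<le> i \<and> i \<le> r}
   \<union> {fa_prod (replicate (m i + 1) (letter (i + 1, i, 0))) | i. 1 \<le> i \<and> i \<le> r}"

definition weyl_ideal :: "nat \<Rightarrow> (nat \<Rightarrow> nat) \<Rightarrow> fa set" where
  "weyl_ideal r m = lspan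
     ({fa_mult (fa_mult (word u) g) (word v) | u g v. g \<in> two_sided_gens r}
      \<union> {fa_mult (word u) g | u g. g \<in> weyl_left_gens r m})"

definition weyl_sub :: "nat \<Rightarrow> (nat \<Rightarrow> nat) \<Rightarrow> fa set \<Rightarrow> fa set" where
  "weyl_sub r m X = {fa_add p q | p q. p \<in> lspan X \<and> q \<in> weyl_ideal r m}"

text \<open>Words in the generators x^pm_{i,j} (1<=i<=j<=r-1) of g_{r-1} = sl_r, i.e. E_{a,b}, a /= b in 1..r;
  and in the x^-_{i,j} (1<=i<=j<=r-1), i.e. E_{a,b} with 1 <= b < a <= r.\<close>
definition g_sub_word :: "nat \<Rightarrow> gen list \<Rightarrow> bool" where
  "g_sub_word r u = (\<forall>(a, b, k) \<in> set u. 1 \<le> a \<and> a \<le> r \<and> 1 \<le> b \<and> b \<le> r \<and> a \<noteq> b)"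

definition nminus_sub_word :: "nat \<Rightarrow> gen list \<Rightarrow> bool" where
  "nminus_sub_word r u = (\<forall>(a, b, k) \<in> set u. 1 \<le> b \<and> b < a \<and> a \<le> r)"

text \<open>(l, s) in F^r: for each i in 1..r a nondecreasing list s_i; l_i = length s_i\<close>
definition in_Fr :: "nat \<Rightarrow> (nat \<Rightarrow> nat list) \<Rightarrow> bool" where
  "in_Fr r S = (\<forall>i\<in>{1..r}. sorted (S i))"

definition ell :: "(nat \<Rightarrow> nat list) \<Rightarrow> nat \<Rightarrow> nat" where "ell S = (\<lambda>i. length (S i))"
definition degs :: "(nat \<Rightarrow> nat list) \<Rightarrow> nat \<Rightarrow> nat" where "degs S = (\<lambda>i. sum_list (S i))"

text \<open>x^-_r(l,s) = prod_{i=1}^r prod_p (x^-_{i,r} (x) t^{s_i(p)}), x^-_{i,r} = E_{r+1,i}\<close>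
definition xr :: "nat \<Rightarrow> (nat \<Rightarrow> nat list) \<Rightarrow> fa" where
  "xr r S = fa_prod (concat (map (\<lambda>i. map (\<lambda>s. letter (r + 1, i, s)) (S i)) [1..<r+1]))"

definition idx_gt :: "nat \<Rightarrow> (nat \<Rightarrow> nat) \<times> (nat \<Rightarrow> nat) \<Rightarrow> (nat \<Rightarrow> nat) \<times> (nat \<Rightarrow> nat) \<Rightarrow> bool" where
  "idx_gt r x y = (case x of (l, d) \<Rightarrow> case y of (l', d') \<Rightarrow>
     (\<exists>s\<in>{1..r}. l s \<noteq> l' s \<and> (\<forall>q\<in>{1..<s}. l q = l' q) \<and> l s < l' s)
     \<or> ((\<forall>s\<in>{1..r}. l s = l' s) \<and>
        (\<exists>s\<in>{1..r}. d s \<noteq> d' s \<and> (\<forall>q\<in>{s<..r}. d q = d' q) \<and> d s > d' s)))"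

definition idx_ge :: "nat \<Rightarrow> (nat \<Rightarrow> nat) \<times> (nat \<Rightarrow> nat) \<Rightarrow> (nat \<Rightarrow> nat) \<times> (nat \<Rightarrow> nat) \<Rightarrow> bool" where
  "idx_ge r x y = (idx_gt r x y \<or>
     (\<forall>s\<in>{1..r}. fst x s = fst y s \<and> snd x s = snd y s))"

text \<open>sum over (l,s) in F^r with rel (l,|s|) i of  U(word-subalgebra) x^-_r(l,s) w_lambda,
  as a subspace of W(lambda) (preimage in F)\<close>
definition filt :: "nat \<Rightarrow> (nat \<Rightarrow> nat) \<Rightarrow> (nat \<Rightarrow> gen list \<Rightarrow> bool)
   \<Rightarrow> (nat \<Rightarrow> (nat \<Rightarrow> nat) \<times> (nat \<Rightarrow> nat) \<Rightarrow> (nat \<Rightarrow> nat) \<times> (nat \<Rightarrow> nat) \<Rightarrow> bool)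
   \<Rightarrow> (nat \<Rightarrow> nat) \<times> (nat \<Rightarrow> nat) \<Rightarrow> fa set" where
  "filt r m subw rel i = weyl_sub r m
     {fa_mult (fa_mult (fa_prod (map letter u)) (xr r S)) w_lambda | u S.
        subw r u \<and> in_Fr r S \<and> rel r (ell S, degs S) i}"

abbreviation W_ge where "W_ge r m i \<equiv> filt r m g_sub_word idx_ge i"
abbreviation W_gt where "W_gt r m i \<equiv> filt r m g_sub_word idx_gt i"
abbreviation Un_ge where "Un_ge r m i \<equiv> filt r m nminus_sub_word idx_ge i"
abbreviation Un_gt where "Un_gt r m i \<equiv> filt r m nminus_sub_word idx_gt i"

end

theory Submission imports Defs "HOL-Library.Function_Algebras" "HOL-Library.Multiset" begin

lemma fa_add_eq[simp]: "fa_add p q = p + q" by (auto simp: fa_add_def)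
lemma fa_sub_eq[simp]: "fa_sub p q = p - q" by (auto simp: fa_sub_def)
lemma fa_zero_eq[simp]: "fa_zero = 0" by (auto simp: fa_zero_def)

lemma word_mult: "fa_mult (word u) (word v) = word (u @ v)"
proof (rule ext)
  fix w :: "gen list"
  have eq: "\<And>i. i \<le> length w \<Longrightarrow> word u (take i w) * word v (drop i w) =
      (if i = length u \<and> w = u @ v then 1 else 0)"
    by (auto simp: word_def)
  have "fa_mult (word u) (word v) w = (\<Sum>i\<le>length w. (if i = length u \<and> w = u @ v then 1 else 0))"
    unfolding fa_mult_def using eq by (intro sum.cong) auto
  also have "\<dots> = word (u @ v) w"
    by (auto simp: word_def sum.delta' if_distrib cong: if_cong) 
  finally show "fa_mult (word u) (word v) w = word (u @ v) w" .
qed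

lemma fa_mult_assoc: "fa_mult (fa_mult p q) s = fa_mult p (fa_mult q s)"
proof (rule ext)
  fix w :: "gen list"
  define n where "n = length w"
  define F where "F = (\<lambda>i j. p (take j w) * q (take (i - j) (drop j w)) * s (drop i w))"
  have "fa_mult (fa_mult p q) s w = (\<Sum>i\<le>n. \<Sum>j\<in>{j\<in>{..n}. j \<le> i}. F i j)"
  proof -
    have "\<And>i. i \<le> n \<Longrightarrow> {j\<in>{..n}. j \<le> i} = {..i}" by auto
    then show ?thesis
      unfolding fa_mult_def F_def n_def
      by (intro sum.cong) (auto simp: sum_distrib_right min_def take_drop intro!: sum.cong)
  qed
  also have "\<dots> = (\<Sum>j\<le>n. \<Sum>i\<in>{i\<in>{..n}. j \<le> i}. F i j)"
    by (rule sum.swap_restrict) auto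
  also have "\<dots> = fa_mult p (fa_mult q s) w"
  proof -
    have "\<And>j. j \<le> n \<Longrightarrow> (\<Sum>i\<in>{i\<in>{..n}. j \<le> i}. F i j) = (\<Sum>k\<le>n - j. F (j + k) j)"
    proof -
      fix j assume "j \<le> n"
      have "{i\<in>{..n}. j \<le> i} = (\<lambda>k. j + k) ` {..n - j}" 
        using \<open>j \<le> n\<close> by (auto simp: image_iff) (metis atMost_iff diff_le_mono le_add_diff_inverse)
      moreover have "inj_on (\<lambda>k. j + k) {..n - j}" by auto
      ultimately show "(\<Sum>i\<in>{i\<in>{..n}. j \<le> i}. F i j) = (\<Sum>k\<le>n - j. F (j + k) j)"
        by (simp add: sum.reindex)
    qed
    then show ?thesis
      unfolding fa_mult_def F_def n_def
      by (intro sum.cong) (auto simp: sum_distrib_left mult.assoc add.commute)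
  qed
  finally show "fa_mult (fa_mult p q) s w = fa_mult p (fa_mult q s) w" .
qed

lemma fa_mult_add_right: "fa_mult p (q + s) = fa_mult p q + fa_mult p s"
  by (rule ext) (simp add: fa_mult_def distrib_left sum.distrib)
lemma fa_mult_add_left: "fa_mult (p + q) s = fa_mult p s + fa_mult q s"
  by (rule ext) (simp add: fa_mult_def distrib_right sum.distrib)
lemma fa_mult_diff_right: "fa_mult p (q - s) = fa_mult p q - fa_mult p s"
  by (rule ext) (simp add: fa_mult_def right_diff_distrib sum_subtractf)
lemma fa_mult_diff_left: "fa_mult (p - q) s = fa_mult p s - fa_mult q s"
  by (rule ext) (simp add: fa_mult_def left_diff_distrib sum_subtractf)
lemma fa_mult_zero_right[simp]: "fa_mult p 0 = 0"
  by (rule ext) (simp add: fa_mult_def)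
lemma fa_mult_zero_left[simp]: "fa_mult 0 p = 0"
  by (rule ext) (simp add: fa_mult_def)
lemma fa_mult_smult_right: "fa_mult p (fa_smult c q) = fa_smult c (fa_mult p q)"
  by (rule ext) (simp add: fa_mult_def fa_smult_def sum_distrib_left algebra_simps)

lemma word_nil_mult[simp]: "fa_mult (word []) p = p"
proof (rule ext)
  fix w :: "gen list"
  have "fa_mult (word []) p w = (\<Sum>i\<le>length w. if i = 0 then p w else 0)"
    unfolding fa_mult_def by (intro sum.cong) (auto simp: word_def)
  then show "fa_mult (word []) p w = p w" by simp
qed

lemma letter_word: "letter g = word [g]" by (simp add: letter_def)

lemma ls_zero[intro]: "0 \<in> lspan S" using lspan_zero by simp
lemma ls_add[intro]: "p \<in> lspan S \<Longrightarrow> q \<in> lspan S \<Longrightarrow> p + q \<in> lspan S"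
  using lspan_add by simp
lemma ls_smult[intro]: "p \<in> lspan S \<Longrightarrow> fa_smult c p \<in> lspan S"
  using lspan_smult by simp
lemma ls_uminus[intro]: "p \<in> lspan S \<Longrightarrow> - p \<in> lspan S"
proof -
  assume "p \<in> lspan S"
  then have "fa_smult (-1) p \<in> lspan S" by auto
  moreover have "fa_smult (-1) p = - p" by (rule ext) (simp add: fa_smult_def)
  ultimately show ?thesis by simp
qed
lemma ls_diff[intro]: "p \<in> lspan S \<Longrightarrow> q \<in> lspan S \<Longrightarrow> p - q \<in> lspan S"
  using ls_add[of p S "-q"] ls_uminus[of q S] by simp
lemma ls_gen[intro]: "p \<in> S \<Longrightarrow> p \<in> lspan S" by (rule lspan_gen)

lemma ls_subset: "A \<subseteq> lspan B \<Longrightarrow> p \<in> lspan A \<Longrightarrow> p \<in> lspan B"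
proof -
  assume A: "A \<subseteq> lspan B" and p: "p \<in> lspan A"
  from p show "p \<in> lspan B"
  proof (induction rule: lspan.induct)
    case lspan_zero then show ?case by (rule lspan.lspan_zero)
  next
    case (lspan_gen p) then show ?case using A by blast
  next
    case (lspan_add p q) then show ?case by (intro lspan.lspan_add)
  next
    case (lspan_smult p c) then show ?case by (intro lspan.lspan_smult)
  qed
qed
lemma ls_mono: "A \<subseteq> B \<Longrightarrow> p \<in> lspan A \<Longrightarrow> p \<in> lspan B"
  using ls_subset[of A B p] by auto

lemma ls_linear:
  assumes add: "\<And>p q. f (p + q) = f p + f q" and sm: "\<And>c p. f (fa_smult c p) = fa_smult c (f p)"
    and z: "f 0 = 0" and A: "\<And>x. x \<in> A \<Longrightarrow> f x \<in> lspan B" and p: "p \<in> lspan A"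
  shows "f p \<in> lspan B"
  using p
proof (induction rule: lspan.induct)
  case lspan_zero then show ?case using z fa_zero_eq ls_zero by metis
next
  case (lspan_gen p) then show ?case using A by blast
next
  case (lspan_add p q) then show ?case using add[of p q] ls_add fa_add_eq by metis
next
  case (lspan_smult p c) then show ?case using sm[of c p] ls_smult by metis
qed

definition Gs :: "nat \<Rightarrow> (nat \<Rightarrow> nat) \<Rightarrow> fa set" where
  "Gs r m = {fa_mult (fa_mult (word u) g) (word v) | u g v. g \<in> two_sided_gens r}
      \<union> {fa_mult (word u) g | u g. g \<in> weyl_left_gens r m}"

lemma weyl_ideal_Gs: "weyl_ideal r m = lspan (Gs r m)"
  by (simp add: weyl_ideal_def Gs_def)

lemma Gs_left: "g \<in> weyl_left_gens r m \<Longrightarrow> fa_mult (word u) g \<in> Gs r m"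
  unfolding Gs_def by auto

lemma Lc_Gs: "x \<in> Gs r m \<Longrightarrow> fa_mult (word c) x \<in> Gs r m"
  unfolding Gs_def
  by (auto simp: fa_mult_assoc[symmetric] word_mult) (metis fa_mult_assoc word_mult)+

lemma span_Lc:
  assumes p: "p \<in> lspan (A \<union> Gs r m)" and A: "\<And>x. x \<in> A \<Longrightarrow> fa_mult (word c) x \<in> lspan (B \<union> Gs r m)"
  shows "fa_mult (word c) p \<in> lspan (B \<union> Gs r m)"
  apply (rule ls_linear[OF _ _ _ _ p])
     apply (rule fa_mult_add_right)
    apply (rule fa_mult_smult_right)
   apply (rule fa_mult_zero_right)
  using A Lc_Gs[of _ r m c] by blast

lemma bracket_word: "fa_mult (bracket (a,b,k) (c,d,l)) (word v) =
   (if b = c then word ((a,d,k+l) # v) else 0) - (if d = a then word ((c,b,k+l) # v) else 0)"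
  by (simp add: bracket_def fa_mult_diff_left letter_word word_mult)

lemma swap_gen:
  assumes "valid_gen r g1" "valid_gen r g2"
  shows "word (u @ g1 # g2 # v) - word (u @ g2 # g1 # v)
     - fa_mult (word u) (fa_mult (bracket g1 g2) (word v)) \<in> lspan (Gs r m)"
proof -
  define G where "G = fa_sub (fa_sub (fa_mult (letter g1) (letter g2)) (fa_mult (letter g2) (letter g1)))
             (bracket g1 g2)"
  have "G \<in> two_sided_gens r" using assms unfolding G_def two_sided_gens_def by blast
  then have "fa_mult (fa_mult (word u) G) (word v) \<in> Gs r m" unfolding Gs_def by blast
  moreover have "fa_mult (fa_mult (word u) G) (word v) = word (u @ g1 # g2 # v) - word (u @ g2 # g1 # v)
     - fa_mult (word u) (fa_mult (bracket g1 g2) (word v))"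
    unfolding G_def
    by (simp add: fa_mult_assoc fa_mult_diff_left fa_mult_diff_right letter_word word_mult)
  ultimately show ?thesis by auto
qed

lemma ls_comb3: "X - Y - Z \<in> lspan S \<Longrightarrow> Y \<in> lspan S \<Longrightarrow> Z \<in> lspan S \<Longrightarrow> X \<in> lspan S"
proof -
  assume a: "X - Y - Z \<in> lspan S" "Y \<in> lspan S" "Z \<in> lspan S"
  have "X = (X - Y - Z) + Y + Z" by (simp add: algebra_simps)
  then show ?thesis using a by (metis ls_add)
qed

lemma ls_if: "w \<in> lspan S \<Longrightarrow> (if c then w else 0) \<in> lspan S" by auto

lemma ls_Un_right: "p \<in> lspan B \<Longrightarrow> p \<in> lspan (A \<union> B)"
  by (rule ls_mono[of B]) auto

definition xw :: "nat \<Rightarrow> (nat \<times> nat) list \<Rightarrow> gen list" where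
  "xw r L = map (\<lambda>(i, s). (r + 1, i, s)) L"

lemma xw_simps[simp]: "xw r [] = []" "xw r ((i,s) # L) = (r+1, i, s) # xw r L"
  "xw r (L1 @ L2) = xw r L1 @ xw r L2"
  by (auto simp: xw_def)

definition validL :: "nat \<Rightarrow> (nat \<times> nat) list \<Rightarrow> bool" where
  "validL r L = (\<forall>p\<in>set L. 1 \<le> fst p \<and> fst p \<le> r)"

definition repl :: "nat \<Rightarrow> nat \<Rightarrow> nat \<Rightarrow> (nat \<times> nat) list \<Rightarrow> (nat \<times> nat) list \<Rightarrow> bool" where
  "repl a b k L L' = (\<exists>xs ys s. L = xs @ (a, s) # ys \<and> L' = xs @ (b, k + s) # ys)"

definition bump :: "nat \<Rightarrow> (nat \<times> nat) list \<Rightarrow> (nat \<times> nat) list \<Rightarrow> bool" where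
  "bump k L L' = (\<exists>xs ys i s. L = xs @ (i, s) # ys \<and> L' = xs @ (i, s + k) # ys)"

lemma valid_gen_simp: "valid_gen r (a, b, k) = (1 \<le> a \<and> a \<le> r + 1 \<and> 1 \<le> b \<and> b \<le> r + 1)"
  by (simp add: valid_gen_def)

lemma pos_xr:
  assumes ab: "1 \<le> a" "a < b" "b \<le> r" and v: "validL r L"
  shows "word ((a,b,k) # xw r L) \<in> lspan ({word (xw r L') | L'. repl a b k L L' \<and> validL r L'} \<union> Gs r m)"
  using v
proof (induction L)
  case Nil
  have "letter (a,b,k) \<in> {letter (a, b, k) | a b k. 1 \<le> a \<and> a < b \<and> b \<le> r + 1}"
    by (rule CollectI, rule exI[of _ a], rule exI[of _ b], rule exI[of _ k]) (use ab in auto)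
  then have "letter (a,b,k) \<in> weyl_left_gens r m" unfolding weyl_left_gens_def by (intro UnI1)
  then have "fa_mult (word []) (letter (a,b,k)) \<in> Gs r m" by (rule Gs_left)
  then have "word ((a,b,k) # xw r []) \<in> Gs r m" by (simp add: letter_word)
  then show ?case by (intro ls_Un_right ls_gen)
next
  case (Cons x L)
  obtain i s where x: "x = (i, s)" by (cases x)
  have vL: "validL r L" and i: "1 \<le> i" "i \<le> r" using Cons.prems x by (auto simp: validL_def)
  define T where "T = {word (xw r L') | L'. repl a b k (x # L) L' \<and> validL r L'}"
  have sw: "word ([] @ (a,b,k) # (r+1,i,s) # xw r L) - word ([] @ (r+1,i,s) # (a,b,k) # xw r L)
     - fa_mult (word []) (fa_mult (bracket (a,b,k) (r+1,i,s)) (word (xw r L))) \<in> lspan (Gs r m)"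
    by (rule swap_gen) (use ab i in \<open>auto simp: valid_gen_simp\<close>)
  have br: "fa_mult (bracket (a,b,k) (r+1,i,s)) (word (xw r L)) =
      0 - (if i = a then word ((r+1,b,k+s) # xw r L) else 0)"
    using ab by (simp add: bracket_word)
  have Y: "word ((r+1,i,s) # (a,b,k) # xw r L) \<in> lspan (T \<union> Gs r m)"
  proof -
    have "fa_mult (word [(r+1,i,s)]) (word ((a,b,k) # xw r L)) \<in> lspan (T \<union> Gs r m)"
    proof (rule span_Lc[OF Cons.IH[OF vL]])
      fix y assume "y \<in> {word (xw r L') | L'. repl a b k L L' \<and> validL r L'}"
      then obtain L' where y: "y = word (xw r L')" "repl a b k L L'" "validL r L'" by blast
      then obtain xs ys t where e: "L = xs @ (a, t) # ys" "L' = xs @ (b, k + t) # ys"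
        unfolding repl_def by blast
      have "x # L = ((i,s) # xs) @ (a, t) # ys \<and> (i,s) # L' = ((i,s) # xs) @ (b, k + t) # ys"
        using e x by simp
      then have "repl a b k (x # L) ((i,s) # L')" unfolding repl_def by blast
      moreover have "validL r ((i,s) # L')" using y i by (auto simp: validL_def)
      ultimately have "word (xw r ((i,s) # L')) \<in> T" unfolding T_def by blast
      then show "fa_mult (word [(r+1,i,s)]) y \<in> lspan (T \<union> Gs r m)"
        using y by (auto simp: word_mult)
    qed
    then show ?thesis by (simp add: word_mult)
  qed
  have Z: "(if i = a then word ((r+1,b,k+s) # xw r L) else 0) \<in> lspan (T \<union> Gs r m)"
  proof (cases "i = a")
    case True
    have "x # L = [] @ (a, s) # L \<and> (b, k+s) # L = [] @ (b, k + s) # L" using x True by simp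
    then have "repl a b k (x # L) ((b, k+s) # L)" unfolding repl_def by blast
    moreover have "validL r ((b, k+s) # L)" using vL ab by (auto simp: validL_def)
    ultimately have "word (xw r ((b, k+s) # L)) \<in> T" unfolding T_def by blast
    then show ?thesis using True by auto
  qed auto
  have "word ((a,b,k) # (r+1,i,s) # xw r L) \<in> lspan (T \<union> Gs r m)"
  proof (rule ls_comb3[OF _ Y])
    show "word ((a,b,k) # (r+1,i,s) # xw r L) - word ((r+1,i,s) # (a,b,k) # xw r L)
      - fa_mult (bracket (a,b,k) (r+1,i,s)) (word (xw r L)) \<in> lspan (T \<union> Gs r m)"
      using ls_Un_right[OF sw] by simp
    show "fa_mult (bracket (a,b,k) (r+1,i,s)) (word (xw r L)) \<in> lspan (T \<union> Gs r m)"
      unfolding br by (intro ls_diff ls_zero Z)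
  qed
  then show ?case using x unfolding T_def by simp
qed

lemma ls_comb_diag:
  "X1 - Y1 - B1 \<in> lspan S \<Longrightarrow> X2 - Y2 - B2 \<in> lspan S \<Longrightarrow> Y1 - Y2 \<in> lspan S
   \<Longrightarrow> B1 \<in> lspan S \<Longrightarrow> B2 \<in> lspan S \<Longrightarrow> X1 - X2 \<in> lspan S"
proof -
  assume a: "X1 - Y1 - B1 \<in> lspan S" "X2 - Y2 - B2 \<in> lspan S" "Y1 - Y2 \<in> lspan S"
     "B1 \<in> lspan S" "B2 \<in> lspan S"
  have "X1 - X2 = (X1 - Y1 - B1) - (X2 - Y2 - B2) + (Y1 - Y2) + B1 - B2" by (simp add: algebra_simps)
  then show ?thesis using a by (metis ls_add ls_diff)
qed

lemma hgen_span:
  assumes i: "1 \<le> i" "i \<le> r"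
  shows "hgen i k \<in> lspan ({word []} \<union> Gs r m)"
proof (cases "k = 0")
  case False
  have "hgen i k \<in> {hgen i k | i k. 1 \<le> i \<and> i \<le> r \<and> 1 \<le> k}"
    by (rule CollectI, rule exI[of _ i], rule exI[of _ k]) (use i False in auto)
  then have "hgen i k \<in> weyl_left_gens r m" unfolding weyl_left_gens_def by (intro UnI1 UnI2)
  then have "fa_mult (word []) (hgen i k) \<in> Gs r m" by (rule Gs_left)
  then show ?thesis by (intro ls_Un_right ls_gen) simp
next
  case True
  have "fa_sub (hgen i 0) (fa_smult (of_nat (m i)) (word [])) \<in>
     {fa_sub (hgen i 0) (fa_smult (of_nat (m i)) (word [])) | i. 1 \<le> i \<and> i \<le> r}"
    by (rule CollectI, rule exI[of _ i]) (use i in auto)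
  then have "fa_sub (hgen i 0) (fa_smult (of_nat (m i)) (word [])) \<in> weyl_left_gens r m"
    unfolding weyl_left_gens_def by (intro UnI1 UnI2)
  then have "fa_mult (word []) (fa_sub (hgen i 0) (fa_smult (of_nat (m i)) (word []))) \<in> Gs r m"
    by (rule Gs_left)
  then have 1: "hgen i 0 - fa_smult (of_nat (m i)) (word []) \<in> lspan ({word []} \<union> Gs r m)"
    by (intro ls_Un_right ls_gen) simp
  have 2: "fa_smult (of_nat (m i)) (word []) \<in> lspan ({word []} \<union> Gs r m)"
    by (intro ls_smult ls_gen) simp
  have "hgen i 0 = (hgen i 0 - fa_smult (of_nat (m i)) (word [])) + fa_smult (of_nat (m i)) (word [])"
    by simp
  then show ?thesis using 1 2 True by (metis ls_add)
qed

lemma D_nil_le: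
  assumes "1 \<le> a" "a \<le> b" "b \<le> r"
  shows "word [(a,a,k)] - word [(b,b,k)] \<in> lspan ({word []} \<union> Gs r m)"
proof -
  have "b \<le> r \<longrightarrow> word [(a,a,k)] - word [(b,b,k)] \<in> lspan ({word []} \<union> Gs r m)"
    using assms(2)
  proof (induction b rule: dec_induct)
    case base then show ?case using ls_zero diff_self by metis
  next
    case (step n)
    show ?case
    proof
      assume "Suc n \<le> r"
      then have IH: "word [(a,a,k)] - word [(n,n,k)] \<in> lspan ({word []} \<union> Gs r m)" using step.IH by (metis Suc_leD)
      have h: "hgen n k \<in> lspan ({word []} \<union> Gs r m)"
        using hgen_span[of n r k m] step \<open>Suc n \<le> r\<close> assms(1) by simp
      have "word [(a,a,k)] - word [(Suc n, Suc n, k)] = (word [(a,a,k)] - word [(n,n,k)]) + hgen n k"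
        by (simp add: hgen_def letter_word)
      then show "word [(a,a,k)] - word [(Suc n, Suc n, k)] \<in> lspan ({word []} \<union> Gs r m)"
        using IH h by (metis ls_add)
    qed
  qed
  then show ?thesis using assms by simp
qed

lemma D_nil:
  assumes "1 \<le> a" "a \<le> r" "1 \<le> b" "b \<le> r"
  shows "word [(a,a,k)] - word [(b,b,k)] \<in> lspan ({word []} \<union> Gs r m)"
proof (cases "a \<le> b")
  case True then show ?thesis using D_nil_le assms by blast
next
  case False
  then have "word [(b,b,k)] - word [(a,a,k)] \<in> lspan ({word []} \<union> Gs r m)"
    using D_nil_le[of b a r k m] assms by simp
  then have "- (word [(b,b,k)] - word [(a,a,k)]) \<in> lspan ({word []} \<union> Gs r m)" by (rule ls_uminus)
  then show ?thesis by simp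
qed

lemma diag_xr:
  assumes ab: "1 \<le> a" "a \<le> r" "1 \<le> b" "b \<le> r" and v: "validL r L"
  shows "word ((a,a,k) # xw r L) - word ((b,b,k) # xw r L)
    \<in> lspan ({word (xw r L') | L'. (L' = L \<or> bump k L L') \<and> validL r L'} \<union> Gs r m)"
  using v
proof (induction L)
  case Nil
  have "word [] \<in> {word (xw r L') | L'. (L' = [] \<or> bump k [] L') \<and> validL r L'}"
    by (rule CollectI, rule exI[of _ "[]"]) (simp add: validL_def)
  then have sub: "{word []} \<union> Gs r m \<subseteq> {word (xw r L') | L'. (L' = [] \<or> bump k [] L') \<and> validL r L'} \<union> Gs r m"
    by blast
  show ?case unfolding xw_simps(1) by (rule ls_mono[OF sub D_nil[OF ab]])
next
  case (Cons x L)
  obtain i s where x: "x = (i, s)" by (cases x)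
  have vL: "validL r L" and i: "1 \<le> i" "i \<le> r" using Cons.prems x by (auto simp: validL_def)
  define T where "T = {word (xw r L') | L'. (L' = x # L \<or> bump k (x # L) L') \<and> validL r L'}"
  have sw1: "word ([] @ (a,a,k) # (r+1,i,s) # xw r L) - word ([] @ (r+1,i,s) # (a,a,k) # xw r L)
     - fa_mult (word []) (fa_mult (bracket (a,a,k) (r+1,i,s)) (word (xw r L))) \<in> lspan (Gs r m)"
    by (rule swap_gen) (use ab i in \<open>auto simp: valid_gen_simp\<close>)
  have sw2: "word ([] @ (b,b,k) # (r+1,i,s) # xw r L) - word ([] @ (r+1,i,s) # (b,b,k) # xw r L)
     - fa_mult (word []) (fa_mult (bracket (b,b,k) (r+1,i,s)) (word (xw r L))) \<in> lspan (Gs r m)"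
    by (rule swap_gen) (use ab i in \<open>auto simp: valid_gen_simp\<close>)
  have br: "\<And>c. c \<le> r \<Longrightarrow> fa_mult (bracket (c,c,k) (r+1,i,s)) (word (xw r L)) =
      0 - (if i = c then word ((r+1,c,k+s) # xw r L) else 0)"
    by (simp add: bracket_word)
  have B: "\<And>c. (if i = c then word ((r+1,c,k+s) # xw r L) else 0) \<in> lspan (T \<union> Gs r m)"
  proof -
    fix c
    have "x # L = [] @ (i, s) # L \<and> (i, s + k) # L = [] @ (i, s + k) # L" using x by simp
    then have "bump k (x # L) ((i, s + k) # L)" unfolding bump_def by blast
    moreover have "validL r ((i, s + k) # L)" using vL i by (auto simp: validL_def)
    ultimately have "word (xw r ((i, s + k) # L)) \<in> T" unfolding T_def by blast
    then have "word ((r+1,i,k+s) # xw r L) \<in> lspan (T \<union> Gs r m)" by (auto simp: add.commute)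
    then show "(if i = c then word ((r+1,c,k+s) # xw r L) else 0) \<in> lspan (T \<union> Gs r m)" by auto
  qed
  have Y: "word ((r+1,i,s) # (a,a,k) # xw r L) - word ((r+1,i,s) # (b,b,k) # xw r L) \<in> lspan (T \<union> Gs r m)"
  proof -
    have "fa_mult (word [(r+1,i,s)]) (word ((a,a,k) # xw r L) - word ((b,b,k) # xw r L)) \<in> lspan (T \<union> Gs r m)"
    proof (rule span_Lc[OF Cons.IH[OF vL]])
      fix y assume "y \<in> {word (xw r L') | L'. (L' = L \<or> bump k L L') \<and> validL r L'}"
      then obtain L' where y: "y = word (xw r L')" "L' = L \<or> bump k L L'" "validL r L'" by blast
      have "(i,s) # L' = x # L \<or> bump k (x # L) ((i,s) # L')"
      proof (cases "L' = L")
        case True then show ?thesis using x by simp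
      next
        case False
        then obtain xs ys j t where e: "L = xs @ (j, t) # ys" "L' = xs @ (j, t + k) # ys"
          using y(2) unfolding bump_def by blast
        have "x # L = ((i,s) # xs) @ (j, t) # ys \<and> (i,s) # L' = ((i,s) # xs) @ (j, t + k) # ys"
          using e x by simp
        then show ?thesis unfolding bump_def by blast
      qed
      moreover have "validL r ((i,s) # L')" using y i by (auto simp: validL_def)
      ultimately have "word (xw r ((i,s) # L')) \<in> T" unfolding T_def by blast
      then show "fa_mult (word [(r+1,i,s)]) y \<in> lspan (T \<union> Gs r m)"
        using y by (auto simp: word_mult)
    qed
    then show ?thesis by (simp add: word_mult fa_mult_diff_right)
  qed
  have "word ((a,a,k) # (r+1,i,s) # xw r L) - word ((b,b,k) # (r+1,i,s) # xw r L) \<in> lspan (T \<union> Gs r m)"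
  proof (rule ls_comb_diag[OF _ _ Y])
    show "word ((a,a,k) # (r+1,i,s) # xw r L) - word ((r+1,i,s) # (a,a,k) # xw r L)
      - fa_mult (bracket (a,a,k) (r+1,i,s)) (word (xw r L)) \<in> lspan (T \<union> Gs r m)"
      using ls_Un_right[OF sw1] by simp
    show "word ((b,b,k) # (r+1,i,s) # xw r L) - word ((r+1,i,s) # (b,b,k) # xw r L)
      - fa_mult (bracket (b,b,k) (r+1,i,s)) (word (xw r L)) \<in> lspan (T \<union> Gs r m)"
      using ls_Un_right[OF sw2] by simp
    show "fa_mult (bracket (a,a,k) (r+1,i,s)) (word (xw r L)) \<in> lspan (T \<union> Gs r m)"
      unfolding br[OF ab(2)] by (intro ls_diff ls_zero B)
    show "fa_mult (bracket (b,b,k) (r+1,i,s)) (word (xw r L)) \<in> lspan (T \<union> Gs r m)"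
      unfolding br[OF ab(4)] by (intro ls_diff ls_zero B)
  qed
  then show ?case using x unfolding T_def by (metis xw_simps(2))
qed

definition idxL :: "(nat \<times> nat) list \<Rightarrow> (nat \<Rightarrow> nat) \<times> (nat \<Rightarrow> nat)" where
  "idxL L = (\<lambda>i. length (filter (\<lambda>p. fst p = i) L), \<lambda>i. sum_list (map snd (filter (\<lambda>p. fst p = i) L)))"

definition lexL :: "nat \<Rightarrow> (nat \<Rightarrow> nat) \<Rightarrow> (nat \<Rightarrow> nat) \<Rightarrow> bool" where
  "lexL r l l' = (\<exists>s\<in>{1..r}. l s \<noteq> l' s \<and> (\<forall>q\<in>{1..<s}. l q = l' q) \<and> l s < l' s)"
definition revD :: "nat \<Rightarrow> (nat \<Rightarrow> nat) \<Rightarrow> (nat \<Rightarrow> nat) \<Rightarrow> bool" where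
  "revD r d d' = (\<exists>s\<in>{1..r}. d s \<noteq> d' s \<and> (\<forall>q\<in>{s<..r}. d q = d' q) \<and> d s > d' s)"
definition eqR :: "nat \<Rightarrow> (nat \<Rightarrow> nat) \<Rightarrow> (nat \<Rightarrow> nat) \<Rightarrow> bool" where
  "eqR r l l' = (\<forall>s\<in>{1..r}. l s = l' s)"

lemma lexL_iff: "lexL r l l' = (\<exists>s\<in>{1..r}. (\<forall>q\<in>{1..<s}. l q = l' q) \<and> l s < l' s)"
  unfolding lexL_def by (metis less_irrefl)
lemma revD_iff: "revD r d d' = (\<exists>s\<in>{1..r}. (\<forall>q\<in>{s<..r}. d q = d' q) \<and> d s > d' s)"
  unfolding revD_def by (metis less_irrefl)

lemma idx_gt_alt: "idx_gt r x y = (lexL r (fst x) (fst y) \<or> (eqR r (fst x) (fst y) \<and> revD r (snd x) (snd y)))"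
  by (cases x, cases y) (auto simp: idx_gt_def lexL_def revD_def eqR_def)

lemma idx_ge_alt: "idx_ge r x y = (idx_gt r x y \<or> (eqR r (fst x) (fst y) \<and> eqR r (snd x) (snd y)))"
  by (auto simp: idx_ge_def eqR_def)

lemma lexL_trans: assumes "lexL r l l'" "lexL r l' l''" shows "lexL r l l''"
proof -
  obtain s1 where s1: "s1 \<in> {1..r}" "\<forall>q\<in>{1..<s1}. l q = l' q" "l s1 < l' s1" using assms(1) unfolding lexL_iff by blast
  obtain s2 where s2: "s2 \<in> {1..r}" "\<forall>q\<in>{1..<s2}. l' q = l'' q" "l' s2 < l'' s2" using assms(2) unfolding lexL_iff by blast
  show ?thesis
  proof (cases "s1 \<le> s2")
    case True
    have "l s1 < l'' s1"
    proof (cases "s1 = s2")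
      case True then show ?thesis using s1 s2 by simp
    next
      case False then have "s1 \<in> {1..<s2}" using True s1 by auto
      then show ?thesis using s1 s2 by simp
    qed
    moreover have "\<forall>q\<in>{1..<s1}. l q = l'' q" using s1 s2 True by auto
    ultimately show ?thesis using s1 unfolding lexL_iff by blast
  next
    case False
    have "s2 \<in> {1..<s1}" using False s2 by auto
    then have "l s2 < l'' s2" using s1 s2 by simp
    moreover have "\<forall>q\<in>{1..<s2}. l q = l'' q" using s1 s2 False by auto
    ultimately show ?thesis using s2 unfolding lexL_iff by blast
  qed
qed

lemma revD_trans: assumes "revD r l l'" "revD r l' l''" shows "revD r l l''"
proof -
  obtain s1 where s1: "s1 \<in> {1..r}" "\<forall>q\<in>{s1<..r}. l q = l' q" "l s1 > l' s1" using assms(1) unfolding revD_iff by blast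
  obtain s2 where s2: "s2 \<in> {1..r}" "\<forall>q\<in>{s2<..r}. l' q = l'' q" "l' s2 > l'' s2" using assms(2) unfolding revD_iff by blast
  show ?thesis
  proof (cases "s2 \<le> s1")
    case True
    have "l s1 > l'' s1"
    proof (cases "s1 = s2")
      case True then show ?thesis using s1 s2 by simp
    next
      case False then have "s1 \<in> {s2<..r}" using True s1 by auto
      then show ?thesis using s1 s2 by simp
    qed
    moreover have "\<forall>q\<in>{s1<..r}. l q = l'' q" using s1 s2 True by auto
    ultimately show ?thesis using s1 unfolding revD_iff by blast
  next
    case False
    have "s2 \<in> {s1<..r}" using False s2 by auto
    then have "l s2 > l'' s2" using s1 s2 by simp
    moreover have "\<forall>q\<in>{s2<..r}. l q = l'' q" using s1 s2 False by auto
    ultimately show ?thesis using s2 unfolding revD_iff by blast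
  qed
qed

lemma lexL_eqR_left: "eqR r l l' \<Longrightarrow> lexL r l' l'' \<Longrightarrow> lexL r l l''"
  unfolding eqR_def lexL_iff by (metis atLeastAtMost_iff atLeastLessThan_iff less_imp_le order_trans)
lemma lexL_eqR_right: "lexL r l l' \<Longrightarrow> eqR r l' l'' \<Longrightarrow> lexL r l l''"
  unfolding eqR_def lexL_iff by (metis atLeastAtMost_iff atLeastLessThan_iff less_imp_le order_trans)
lemma revD_eqR_left: "eqR r l l' \<Longrightarrow> revD r l' l'' \<Longrightarrow> revD r l l''"
  unfolding eqR_def revD_iff by (metis atLeastAtMost_iff greaterThanAtMost_iff less_imp_le order_trans)
lemma revD_eqR_right: "revD r l l' \<Longrightarrow> eqR r l' l'' \<Longrightarrow> revD r l l''"
  unfolding eqR_def revD_iff by (metis atLeastAtMost_iff greaterThanAtMost_iff less_imp_le order_trans)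
lemma eqR_trans: "eqR r l l' \<Longrightarrow> eqR r l' l'' \<Longrightarrow> eqR r l l''"
  unfolding eqR_def by auto
lemma eqR_sym: "eqR r l l' \<Longrightarrow> eqR r l' l"
  unfolding eqR_def by auto

lemma gt_gt: "idx_gt r x y \<Longrightarrow> idx_gt r y z \<Longrightarrow> idx_gt r x z"
  unfolding idx_gt_alt
  using lexL_trans revD_trans lexL_eqR_left lexL_eqR_right eqR_trans by blast

lemma gt_ge: "idx_gt r x y \<Longrightarrow> idx_ge r y z \<Longrightarrow> idx_gt r x z"
  unfolding idx_ge_alt
  using gt_gt[of r x y z] lexL_eqR_right revD_eqR_right eqR_trans unfolding idx_gt_alt by blast

lemma gt_cong: "eqR r (fst x) (fst x') \<Longrightarrow> eqR r (snd x) (snd x') \<Longrightarrow> idx_gt r x z \<Longrightarrow> idx_gt r x' z"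
  unfolding idx_gt_alt
  using lexL_eqR_left revD_eqR_left eqR_trans eqR_sym by blast

lemma ge_cong: "eqR r (fst x) (fst x') \<Longrightarrow> eqR r (snd x) (snd x') \<Longrightarrow> idx_ge r x z \<Longrightarrow> idx_ge r x' z"
  unfolding idx_ge_alt
  using gt_cong[of r x x' z] eqR_trans eqR_sym by blast

lemma repl_gt:
  assumes "1 \<le> a" "a < b" "b \<le> r" "repl a b k L L'"
  shows "idx_gt r (idxL L') (idxL L)"
proof -
  obtain xs ys s where e: "L = xs @ (a, s) # ys" "L' = xs @ (b, k + s) # ys"
    using assms(4) unfolding repl_def by blast
  have "lexL r (fst (idxL L')) (fst (idxL L))"
    unfolding lexL_iff idxL_def e using assms(1-3)
    by (intro bexI[of _ a]) auto
  then show ?thesis unfolding idx_gt_alt by blast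
qed

lemma bump_gt:
  assumes "1 \<le> k" "bump k L L'" "validL r L"
  shows "idx_gt r (idxL L') (idxL L)"
proof -
  obtain xs ys i s where e: "L = xs @ (i, s) # ys" "L' = xs @ (i, s + k) # ys"
    using assms(2) unfolding bump_def by blast
  have i: "1 \<le> i" "i \<le> r" using assms(3) e unfolding validL_def by auto
  have "eqR r (fst (idxL L')) (fst (idxL L))"
    unfolding eqR_def idxL_def e by auto
  moreover have "revD r (snd (idxL L')) (snd (idxL L))"
    unfolding revD_iff idxL_def e using i assms(1)
    by (intro bexI[of _ i]) auto
  ultimately show ?thesis unfolding idx_gt_alt by blast
qed

lemma bump_0: "bump 0 L L' \<Longrightarrow> L' = L"
  unfolding bump_def by auto

definition GenY :: "nat \<Rightarrow> ((nat \<Rightarrow> nat) \<times> (nat \<Rightarrow> nat) \<Rightarrow> bool) \<Rightarrow> fa set" where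
  "GenY r P = {word (v @ xw r L) | v L. nminus_sub_word r v \<and> validL r L \<and> P (idxL L)}"

lemma gen_in:
  "nminus_sub_word r v \<Longrightarrow> validL r L \<Longrightarrow> P (idxL L) \<Longrightarrow> word (v @ xw r L) \<in> lspan (GenY r P \<union> Gs r m)"
  unfolding GenY_def by (intro ls_gen UnI1 CollectI exI conjI) auto

lemma nminus_Cons: "nminus_sub_word r (c # v) = ((case c of (a, b, k) \<Rightarrow> 1 \<le> b \<and> b < a \<and> a \<le> r) \<and> nminus_sub_word r v)"
  unfolding nminus_sub_word_def by auto

lemma neg_stable:
  assumes c: "1 \<le> c2" "c2 < c1" "c1 \<le> r" and p: "p \<in> lspan (GenY r P \<union> Gs r m)"
  shows "fa_mult (word [(c1,c2,l)]) p \<in> lspan (GenY r P \<union> Gs r m)"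
proof (rule span_Lc[OF p])
  fix y assume "y \<in> GenY r P"
  then obtain v L where y: "y = word (v @ xw r L)" "nminus_sub_word r v" "validL r L" "P (idxL L)"
    unfolding GenY_def by blast
  have "nminus_sub_word r ((c1,c2,l) # v)" using y(2) c by (simp add: nminus_Cons)
  then have "word (((c1,c2,l) # v) @ xw r L) \<in> lspan (GenY r P \<union> Gs r m)"
    using y by (intro gen_in)
  then show "fa_mult (word [(c1,c2,l)]) y \<in> lspan (GenY r P \<union> Gs r m)"
    using y(1) by (simp add: word_mult)
qed

lemma main_v:
  assumes up: "\<forall>j j'. P j \<longrightarrow> idx_gt r j' j \<longrightarrow> P j'" and v: "nminus_sub_word r v"
  shows "(\<forall>a b k L. 1 \<le> a \<and> a < b \<and> b \<le> r \<and> validL r L \<and> P (idxL L) \<longrightarrow>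
            word ((a,b,k) # v @ xw r L) \<in> lspan (GenY r P \<union> Gs r m)) \<and>
         (\<forall>a b k L. 1 \<le> a \<and> a \<le> r \<and> 1 \<le> b \<and> b \<le> r \<and> validL r L \<and> P (idxL L) \<longrightarrow>
            word ((a,a,k) # v @ xw r L) - word ((b,b,k) # v @ xw r L) \<in> lspan (GenY r P \<union> Gs r m))"
  using v
proof (induction v)
  case Nil
  have pos: "word ((a,b,k) # [] @ xw r L) \<in> lspan (GenY r P \<union> Gs r m)"
    if ab: "1 \<le> a" "a < b" "b \<le> r" "validL r L" "P (idxL L)" for a b k L
  proof -
    have sub: "{word (xw r L') | L'. repl a b k L L' \<and> validL r L'} \<union> Gs r m \<subseteq> GenY r P \<union> Gs r m"
    proof (intro Un_mono subsetI order.refl)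
      fix y assume "y \<in> {word (xw r L') | L'. repl a b k L L' \<and> validL r L'}"
      then obtain L' where y: "y = word ([] @ xw r L')" "repl a b k L L'" "validL r L'" by auto
      have "P (idxL L')" using up[rule_format, OF ab(5) repl_gt[OF ab(1-3) y(2)]] .
      then have "y = word ([] @ xw r L') \<and> nminus_sub_word r [] \<and> validL r L' \<and> P (idxL L')"
        using y by (simp add: nminus_sub_word_def)
      then show "y \<in> GenY r P" unfolding GenY_def by blast
    qed
    show ?thesis unfolding append_Nil by (rule ls_mono[OF sub pos_xr[OF ab(1-4), of k m]])
  qed
  have diag: "word ((a,a,k) # [] @ xw r L) - word ((b,b,k) # [] @ xw r L) \<in> lspan (GenY r P \<union> Gs r m)"
    if ab: "1 \<le> a" "a \<le> r" "1 \<le> b" "b \<le> r" "validL r L" "P (idxL L)" for a b k L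
  proof -
    have sub: "{word (xw r L') | L'. (L' = L \<or> bump k L L') \<and> validL r L'} \<union> Gs r m \<subseteq> GenY r P \<union> Gs r m"
    proof (intro Un_mono subsetI order.refl)
      fix y assume "y \<in> {word (xw r L') | L'. (L' = L \<or> bump k L L') \<and> validL r L'}"
      then obtain L' where y: "y = word ([] @ xw r L')" "L' = L \<or> bump k L L'" "validL r L'" by auto
      have "P (idxL L')"
      proof (cases "L' = L")
        case True then show ?thesis using ab by simp
      next
        case False
        then have bL: "bump k L L'" using y by simp
        have "k \<noteq> 0"
        proof
          assume "k = 0" then show False using bL False bump_0 by simp
        qed
        then have "idx_gt r (idxL L') (idxL L)" using bump_gt[OF _ bL ab(5)] by simp
        then show ?thesis using up ab(6) by blast
      qed
      then have "y = word ([] @ xw r L') \<and> nminus_sub_word r [] \<and> validL r L' \<and> P (idxL L')"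
        using y by (simp add: nminus_sub_word_def)
      then show "y \<in> GenY r P" unfolding GenY_def by blast
    qed
    show ?thesis unfolding append_Nil by (rule ls_mono[OF sub diag_xr[OF ab(1-5), of k m]])
  qed
  show ?case using pos diag by blast
next
  case (Cons c v)
  obtain c1 c2 l where c: "c = (c1, c2, l)" by (cases c)
  have cr: "1 \<le> c2" "c2 < c1" "c1 \<le> r" and nv: "nminus_sub_word r v"
    using Cons.prems c by (auto simp: nminus_Cons)
  note IH = Cons.IH[OF nv]
  have posIH: "word ((a,b,k) # v @ xw r L) \<in> lspan (GenY r P \<union> Gs r m)"
    if "1 \<le> a" "a < b" "b \<le> r" "validL r L" "P (idxL L)" for a b k L
    using IH that by blast
  have diagIH: "word ((a,a,k) # v @ xw r L) - word ((b,b,k) # v @ xw r L) \<in> lspan (GenY r P \<union> Gs r m)"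
    if "1 \<le> a" "a \<le> r" "1 \<le> b" "b \<le> r" "validL r L" "P (idxL L)" for a b k L
    using IH that by blast
  have off: "word ((x,y,k) # v @ xw r L) \<in> lspan (GenY r P \<union> Gs r m)"
    if "1 \<le> x" "x \<le> r" "1 \<le> y" "y \<le> r" "x \<noteq> y" "validL r L" "P (idxL L)" for x y k L
  proof (cases "x < y")
    case True then show ?thesis using posIH that by blast
  next
    case False
    then have "nminus_sub_word r ((x,y,k) # v)" using that nv by (auto simp: nminus_Cons)
    then show ?thesis using gen_in[of r "(x,y,k) # v" L P m] that by simp
  qed
  have pos: "word ((a,b,k) # c # v @ xw r L) \<in> lspan (GenY r P \<union> Gs r m)"
    if ab: "1 \<le> a" "a < b" "b \<le> r" "validL r L" "P (idxL L)" for a b k L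
  proof -
    define rest where "rest = v @ xw r L"
    have sw: "word ([] @ (a,b,k) # (c1,c2,l) # rest) - word ([] @ (c1,c2,l) # (a,b,k) # rest)
       - fa_mult (word []) (fa_mult (bracket (a,b,k) (c1,c2,l)) (word rest)) \<in> lspan (Gs r m)"
      by (rule swap_gen) (use ab cr in \<open>auto simp: valid_gen_simp\<close>)
    have Y: "word ((c1,c2,l) # (a,b,k) # rest) \<in> lspan (GenY r P \<union> Gs r m)"
      using neg_stable[OF cr posIH[OF ab], of l] unfolding rest_def by (simp add: word_mult)
    have br: "fa_mult (bracket (a,b,k) (c1,c2,l)) (word rest) =
      (if b = c1 then word ((a,c2,k+l) # rest) else 0) - (if c2 = a then word ((c1,b,k+l) # rest) else 0)"
      by (simp add: bracket_word)
    have B: "fa_mult (bracket (a,b,k) (c1,c2,l)) (word rest) \<in> lspan (GenY r P \<union> Gs r m)"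
    proof (cases "b = c1")
      case True
      show ?thesis
      proof (cases "c2 = a")
        case True
        then show ?thesis unfolding br using \<open>b = c1\<close> diagIH[of a b L "k+l"] ab unfolding rest_def by simp
      next
        case False
        have "word ((a,c2,k+l) # rest) \<in> lspan (GenY r P \<union> Gs r m)"
          unfolding rest_def using off[of a c2 L "k+l"] ab cr False by simp
        then show ?thesis unfolding br using \<open>b = c1\<close> False by (simp add: ls_diff ls_zero)
      qed
    next
      case False
      show ?thesis
      proof (cases "c2 = a")
        case True
        have "word ((c1,b,k+l) # rest) \<in> lspan (GenY r P \<union> Gs r m)"
          unfolding rest_def using off[of c1 b L "k+l"] ab cr False by simp
        then have "0 - word ((c1,b,k+l) # rest) \<in> lspan (GenY r P \<union> Gs r m)" by (intro ls_diff ls_zero)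
        then show ?thesis unfolding br using False True by simp
      next
        case False
        then show ?thesis unfolding br using \<open>b \<noteq> c1\<close> by (simp add: ls_zero)
      qed
    qed
    have "word ((a,b,k) # (c1,c2,l) # rest) \<in> lspan (GenY r P \<union> Gs r m)"
    proof (rule ls_comb3[OF _ Y B])
      show "word ((a,b,k) # (c1,c2,l) # rest) - word ((c1,c2,l) # (a,b,k) # rest)
        - fa_mult (bracket (a,b,k) (c1,c2,l)) (word rest) \<in> lspan (GenY r P \<union> Gs r m)"
        using ls_Un_right[OF sw] by simp
    qed
    then show ?thesis unfolding rest_def c .
  qed
  have diag: "word ((a,a,k) # c # v @ xw r L) - word ((b,b,k) # c # v @ xw r L) \<in> lspan (GenY r P \<union> Gs r m)"
    if ab: "1 \<le> a" "a \<le> r" "1 \<le> b" "b \<le> r" "validL r L" "P (idxL L)" for a b k L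
  proof -
    define rest where "rest = v @ xw r L"
    have sw1: "word ([] @ (a,a,k) # (c1,c2,l) # rest) - word ([] @ (c1,c2,l) # (a,a,k) # rest)
       - fa_mult (word []) (fa_mult (bracket (a,a,k) (c1,c2,l)) (word rest)) \<in> lspan (Gs r m)"
      by (rule swap_gen) (use ab cr in \<open>auto simp: valid_gen_simp\<close>)
    have sw2: "word ([] @ (b,b,k) # (c1,c2,l) # rest) - word ([] @ (c1,c2,l) # (b,b,k) # rest)
       - fa_mult (word []) (fa_mult (bracket (b,b,k) (c1,c2,l)) (word rest)) \<in> lspan (Gs r m)"
      by (rule swap_gen) (use ab cr in \<open>auto simp: valid_gen_simp\<close>)
    have Y: "word ((c1,c2,l) # (a,a,k) # rest) - word ((c1,c2,l) # (b,b,k) # rest) \<in> lspan (GenY r P \<union> Gs r m)"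
      using neg_stable[OF cr diagIH[OF ab], of l] unfolding rest_def by (simp add: word_mult fa_mult_diff_right)
    have negw: "word ((c1,c2,k+l) # rest) \<in> lspan (GenY r P \<union> Gs r m)"
    proof -
      have "nminus_sub_word r ((c1,c2,k+l) # v)" using cr nv by (simp add: nminus_Cons)
      then show ?thesis unfolding rest_def using gen_in[of r "(c1,c2,k+l) # v" L P m] ab by simp
    qed
    have B: "fa_mult (bracket (e,e,k) (c1,c2,l)) (word rest) \<in> lspan (GenY r P \<union> Gs r m)" for e
    proof -
      have 1: "(if e = c1 then word ((e,c2,k+l) # rest) else 0) \<in> lspan (GenY r P \<union> Gs r m)"
        using negw by (cases "e = c1") (simp_all add: ls_zero)
      have 2: "(if c2 = e then word ((c1,e,k+l) # rest) else 0) \<in> lspan (GenY r P \<union> Gs r m)"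
        using negw by (cases "c2 = e") (simp_all add: ls_zero)
      show ?thesis unfolding bracket_word using 1 2 by (rule ls_diff)
    qed
    have "word ((a,a,k) # (c1,c2,l) # rest) - word ((b,b,k) # (c1,c2,l) # rest) \<in> lspan (GenY r P \<union> Gs r m)"
    proof (rule ls_comb_diag[OF _ _ Y B B])
      show "word ((a,a,k) # (c1,c2,l) # rest) - word ((c1,c2,l) # (a,a,k) # rest)
        - fa_mult (bracket (a,a,k) (c1,c2,l)) (word rest) \<in> lspan (GenY r P \<union> Gs r m)"
        using ls_Un_right[OF sw1] by simp
      show "word ((b,b,k) # (c1,c2,l) # rest) - word ((c1,c2,l) # (b,b,k) # rest)
        - fa_mult (bracket (b,b,k) (c1,c2,l)) (word rest) \<in> lspan (GenY r P \<union> Gs r m)"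
        using ls_Un_right[OF sw2] by simp
    qed
    then show ?thesis unfolding rest_def c .
  qed
  show ?case using pos diag by (simp only: append_Cons) blast
qed

lemma gword:
  assumes upo: "\<forall>j j'. P j \<longrightarrow> idx_gt r j' j \<longrightarrow> P j'"
    and u: "g_sub_word r u" and L: "validL r L" "P (idxL L)"
  shows "word (u @ xw r L) \<in> lspan (GenY r P \<union> Gs r m)"
  using u
proof (induction u)
  case Nil
  show ?case using gen_in[of r "[]" L P m] L by (simp add: nminus_sub_word_def)
next
  case (Cons g u)
  obtain a b k where g: "g = (a, b, k)" by (cases g)
  have ab: "1 \<le> a" "a \<le> r" "1 \<le> b" "b \<le> r" "a \<noteq> b" and gu: "g_sub_word r u"
    using Cons.prems g by (auto simp: g_sub_word_def)
  have "fa_mult (word [g]) (word (u @ xw r L)) \<in> lspan (GenY r P \<union> Gs r m)"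
  proof (rule span_Lc[OF Cons.IH[OF gu]])
    fix y assume "y \<in> GenY r P"
    then obtain v L' where y: "y = word (v @ xw r L')" "nminus_sub_word r v" "validL r L'" "P (idxL L')"
      unfolding GenY_def by blast
    have "word ((a,b,k) # v @ xw r L') \<in> lspan (GenY r P \<union> Gs r m)"
    proof (cases "a < b")
      case True
      then show ?thesis using main_v[where P=P and m=m, OF upo y(2)] ab y by blast
    next
      case False
      then have "nminus_sub_word r ((a,b,k) # v)" using ab y(2) by (simp add: nminus_Cons)
      then show ?thesis using gen_in[of r "(a,b,k) # v" L' P m] y by simp
    qed
    then show "fa_mult (word [g]) y \<in> lspan (GenY r P \<union> Gs r m)" using y g by (simp add: word_mult)
  qed
  then show ?case by (simp add: word_mult)
qed

lemma ls_tele: "A - B \<in> lspan S \<Longrightarrow> B - C \<in> lspan S \<Longrightarrow> A - C \<in> lspan S"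
proof -
  assume "A - B \<in> lspan S" "B - C \<in> lspan S"
  then have "(A - B) + (B - C) \<in> lspan S" by (rule ls_add)
  then show ?thesis by simp
qed

lemma move_xr:
  assumes "validL r ys" "1 \<le> i" "i \<le> r"
  shows "word (v @ (r+1,i,s) # xw r ys @ rest) - word (v @ xw r ys @ (r+1,i,s) # rest) \<in> lspan (Gs r m)"
  using assms(1)
proof (induction ys arbitrary: v)
  case Nil
  show ?case using ls_zero diff_self by (metis append_Nil xw_simps(1))
next
  case (Cons y ys)
  obtain j t where y: "y = (j, t)" by (cases y)
  have j: "1 \<le> j" "j \<le> r" and vys: "validL r ys" using Cons.prems y by (auto simp: validL_def)
  have sw: "word (v @ (r+1,i,s) # (r+1,j,t) # xw r ys @ rest) - word (v @ (r+1,j,t) # (r+1,i,s) # xw r ys @ rest)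
     - fa_mult (word v) (fa_mult (bracket (r+1,i,s) (r+1,j,t)) (word (xw r ys @ rest))) \<in> lspan (Gs r m)"
    by (rule swap_gen) (use assms j in \<open>auto simp: valid_gen_simp\<close>)
  have br: "fa_mult (bracket (r+1,i,s) (r+1,j,t)) (word (xw r ys @ rest)) = 0"
    using assms j by (simp add: bracket_word)
  have IH: "word ((v @ [(r+1,j,t)]) @ (r+1,i,s) # xw r ys @ rest) - word ((v @ [(r+1,j,t)]) @ xw r ys @ (r+1,i,s) # rest) \<in> lspan (Gs r m)"
    by (rule Cons.IH[OF vys])
  have e1: "(v @ [(r+1,j,t)]) @ (r+1,i,s) # xw r ys @ rest = v @ (r+1,j,t) # (r+1,i,s) # xw r ys @ rest" by simp
  have e2: "(v @ [(r+1,j,t)]) @ xw r ys @ (r+1,i,s) # rest = v @ xw r (y # ys) @ (r+1,i,s) # rest" using y by simp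
  have e3: "v @ (r+1,i,s) # (r+1,j,t) # xw r ys @ rest = v @ (r+1,i,s) # xw r (y # ys) @ rest" using y by simp
  have s1: "word (v @ (r+1,i,s) # xw r (y # ys) @ rest) - word (v @ (r+1,j,t) # (r+1,i,s) # xw r ys @ rest) \<in> lspan (Gs r m)"
    using sw by (simp only: br fa_mult_zero_right diff_zero e3)
  have s2: "word (v @ (r+1,j,t) # (r+1,i,s) # xw r ys @ rest) - word (v @ xw r (y # ys) @ (r+1,i,s) # rest) \<in> lspan (Gs r m)"
    using IH by (simp only: e1 e2)
  show ?case by (rule ls_tele[OF s1 s2])
qed

lemma perm_xr:
  assumes "validL r L" "mset L = mset L2"
  shows "word (v @ xw r L) - word (v @ xw r L2) \<in> lspan (Gs r m)"
  using assms
proof (induction L arbitrary: v L2)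
  case Nil
  then have "L2 = []" using mset_zero_iff_right by (metis mset.simps(1))
  then show ?case using ls_zero diff_self by metis
next
  case (Cons x L)
  obtain i s where x: "x = (i, s)" by (cases x)
  have i: "1 \<le> i" "i \<le> r" and vL: "validL r L" using Cons.prems x by (auto simp: validL_def)
  have "x \<in> set L2" using Cons.prems(2) by (metis list.set_intros(1) set_mset_mset)
  then obtain ys zs where L2: "L2 = ys @ x # zs" by (meson split_list)
  have m: "mset L = mset (ys @ zs)" using Cons.prems(2) L2 by simp
  have vys: "validL r ys"
  proof -
    have "set ys \<subseteq> set L2" using L2 by auto
    also have "set L2 = set (x # L)" using Cons.prems(2) by (metis set_mset_mset)
    finally show ?thesis using Cons.prems(1) unfolding validL_def by blast
  qed
  have IH: "word ((v @ [(r+1,i,s)]) @ xw r L) - word ((v @ [(r+1,i,s)]) @ xw r (ys @ zs)) \<in> lspan (Gs r m)"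
    by (rule Cons.IH[OF vL m])
  have mv: "word (v @ (r+1,i,s) # xw r ys @ xw r zs) - word (v @ xw r ys @ (r+1,i,s) # xw r zs) \<in> lspan (Gs r m)"
    by (rule move_xr[OF vys i])
  have e1: "(v @ [(r+1,i,s)]) @ xw r L = v @ xw r (x # L)" using x by simp
  have e2: "(v @ [(r+1,i,s)]) @ xw r (ys @ zs) = v @ (r+1,i,s) # xw r ys @ xw r zs" by simp
  have e3: "v @ xw r ys @ (r+1,i,s) # xw r zs = v @ xw r L2" using L2 x by simp
  have s1: "word (v @ xw r (x # L)) - word (v @ (r+1,i,s) # xw r ys @ xw r zs) \<in> lspan (Gs r m)"
    using IH by (simp only: e1 e2)
  have s2: "word (v @ (r+1,i,s) # xw r ys @ xw r zs) - word (v @ xw r L2) \<in> lspan (Gs r m)"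
    using mv by (simp only: e3)
  show ?case by (rule ls_tele[OF s1 s2])
qed

definition LS :: "nat \<Rightarrow> (nat \<Rightarrow> nat list) \<Rightarrow> (nat \<times> nat) list" where
  "LS r S = concat (map (\<lambda>i. map (Pair i) (S i)) [1..<r+1])"

definition SL :: "(nat \<times> nat) list \<Rightarrow> nat \<Rightarrow> nat list" where
  "SL L = (\<lambda>i. sort (map snd (filter (\<lambda>p. fst p = i) L)))"

lemma fa_prod_word: "fa_prod (map letter u) = word u"
  by (induction u) (simp_all add: fa_prod_def letter_word word_mult)

lemma xr_word: "xr r S = word (xw r (LS r S))"
proof -
  have "concat (map (\<lambda>i. map (\<lambda>s. letter (r + 1, i, s)) (S i)) [1..<r+1])
      = map letter (concat (map (\<lambda>i. map (\<lambda>s. (r + 1, i, s)) (S i)) [1..<r+1]))"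
    by (simp add: map_concat comp_def)
  moreover have "xw r (LS r S) = concat (map (\<lambda>i. map (\<lambda>s. (r + 1, i, s)) (S i)) [1..<r+1])"
    by (simp add: xw_def LS_def map_concat comp_def)
  ultimately show ?thesis unfolding xr_def by (simp add: fa_prod_word)
qed

lemma gen_elem: "fa_mult (fa_mult (fa_prod (map letter u)) (xr r S)) w_lambda = word (u @ xw r (LS r S))"
  by (simp add: fa_prod_word xr_word w_lambda_def word_mult)

lemma validL_LS: "validL r (LS r S)"
  by (auto simp: validL_def LS_def)

lemma concat_delta: "distinct xs \<Longrightarrow> i \<in> set xs \<Longrightarrow> concat (map (\<lambda>j. if j = i then f j else []) xs) = f i"
proof (induction xs)
  case (Cons x xs)
  show ?case
  proof (cases "x = i")
    case True
    then have "i \<notin> set xs" using Cons.prems by auto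
    then have "concat (map (\<lambda>j. if j = i then f j else []) xs) = []" by (induction xs) auto
    then show ?thesis using True by simp
  next
    case False then show ?thesis using Cons by auto
  qed
qed simp

lemma filter_LS: assumes "1 \<le> i" "i \<le> r"
  shows "filter (\<lambda>p. fst p = i) (LS r S) = map (Pair i) (S i)"
proof -
  have "filter (\<lambda>p. fst p = i) (LS r S) = concat (map (\<lambda>j. if j = i then map (Pair j) (S j) else []) [1..<r+1])"
    unfolding LS_def filter_concat map_map comp_def
    by (intro arg_cong[where f=concat] map_cong refl) (auto simp: filter_map comp_def filter_empty_conv)
  also have "\<dots> = map (Pair i) (S i)" using assms by (intro concat_delta) auto
  finally show ?thesis .
qed

lemma idx_LS: "eqR r (fst (idxL (LS r S))) (ell S) \<and> eqR r (snd (idxL (LS r S))) (degs S)"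
  unfolding eqR_def idxL_def ell_def degs_def
  by (auto simp: filter_LS map_map comp_def)

lemma sum_list_sort': "sum_list (sort xs) = sum_list (xs :: nat list)"
  by (metis mset_sort sum_mset_sum_list)

lemma SL_props: "in_Fr r (SL L) \<and> (ell (SL L), degs (SL L)) = idxL L"
  by (auto simp: in_Fr_def SL_def ell_def degs_def idxL_def sum_list_sort')

lemma filter_img: "image_mset (Pair i) (image_mset snd (filter_mset (\<lambda>p. fst p = i) M)) = filter_mset (\<lambda>p. fst p = i) M"
  by (induction M) auto

lemma mset_LS_SL:
  assumes "validL r L"
  shows "mset (LS r (SL L)) = mset L"
proof -
  have "mset (LS r (SL L)) = (\<Sum>i\<leftarrow>[1..<r+1]. filter_mset (\<lambda>p. fst p = i) (mset L))"
    unfolding LS_def mset_concat map_map comp_def SL_def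
    by (simp add: filter_img)
  also have "\<dots> = (\<Sum>i\<in>{1..<r+1}. filter_mset (\<lambda>p. fst p = i) (mset L))"
    by (subst sum_list_distinct_conv_sum_set) (simp_all only: distinct_upt set_upt)
  also have "\<dots> = mset L"
  proof (rule multiset_eqI)
    fix x :: "nat \<times> nat"
    have "count (\<Sum>i\<in>{1..<r+1}. filter_mset (\<lambda>p. fst p = i) (mset L)) x
        = (\<Sum>i\<in>{1..<r+1}. if fst x = i then count (mset L) x else 0)"
      by (simp add: count_sum)
    also have "\<dots> = (if fst x \<in> {1..<r+1} then count (mset L) x else 0)"
      by (simp add: sum.delta)
    also have "\<dots> = count (mset L) x"
      using assms unfolding validL_def by (auto simp: count_eq_zero_iff)
    finally show "count (\<Sum>i\<in>{1..<r+1}. filter_mset (\<lambda>p. fst p = i) (mset L)) x = count (mset L) x" .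
  qed
  finally show ?thesis .
qed

lemma weyl_sub_in: "p \<in> lspan X \<Longrightarrow> q \<in> lspan (Gs r m) \<Longrightarrow> p + q \<in> weyl_sub r m X"
  unfolding weyl_sub_def weyl_ideal_Gs by (metis (mono_tags, lifting) CollectI fa_add_eq)

lemma weyl_sub_eq: "weyl_sub r m X = lspan (X \<union> Gs r m)"
proof
  show "weyl_sub r m X \<subseteq> lspan (X \<union> Gs r m)"
  proof
    fix x assume "x \<in> weyl_sub r m X"
    then obtain p q where "x = p + q" "p \<in> lspan X" "q \<in> lspan (Gs r m)"
      unfolding weyl_sub_def weyl_ideal_Gs by auto
    then show "x \<in> lspan (X \<union> Gs r m)"
      using ls_mono[of X "X \<union> Gs r m" p] ls_mono[of "Gs r m" "X \<union> Gs r m" q] by (metis Un_upper1 Un_upper2 ls_add)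
  qed
  show "lspan (X \<union> Gs r m) \<subseteq> weyl_sub r m X"
  proof
    fix x assume "x \<in> lspan (X \<union> Gs r m)"
    then show "x \<in> weyl_sub r m X"
    proof (induction rule: lspan.induct)
      case lspan_zero
      have "0 + 0 \<in> weyl_sub r m X" by (intro weyl_sub_in ls_zero)
      then show ?case by (metis add_0 fa_zero_eq)
    next
      case (lspan_gen p)
      then show ?case
      proof
        assume "p \<in> X"
        then have "p + 0 \<in> weyl_sub r m X" by (intro weyl_sub_in ls_zero ls_gen)
        then show ?thesis by simp
      next
        assume "p \<in> Gs r m"
        then have "0 + p \<in> weyl_sub r m X" by (intro weyl_sub_in ls_zero ls_gen)
        then show ?thesis by simp
      qed
    next
      case (lspan_add p q)
      then obtain p1 q1 p2 q2 where "p = p1 + q1" "q = p2 + q2" "p1 \<in> lspan X" "q1 \<in> lspan (Gs r m)"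
         "p2 \<in> lspan X" "q2 \<in> lspan (Gs r m)"
        unfolding weyl_sub_def weyl_ideal_Gs by auto
      moreover have "(p1 + p2) + (q1 + q2) \<in> weyl_sub r m X"
        using calculation by (intro weyl_sub_in ls_add)
      moreover have "fa_add p q = (p1 + p2) + (q1 + q2)"
        using calculation by (intro ext) (simp add: fa_add_def)
      ultimately show ?case by metis
    next
      case (lspan_smult p c)
      then obtain p1 q1 where "p = p1 + q1" "p1 \<in> lspan X" "q1 \<in> lspan (Gs r m)"
        unfolding weyl_sub_def weyl_ideal_Gs by auto
      moreover have "fa_smult c p1 + fa_smult c q1 \<in> weyl_sub r m X"
        using calculation by (intro weyl_sub_in ls_smult)
      moreover have "fa_smult c (p1 + q1) = fa_smult c p1 + fa_smult c q1"
        by (rule ext) (simp add: fa_smult_def algebra_simps)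
      ultimately show ?case by metis
    qed
  qed
qed

lemma nminus_g_sub: "nminus_sub_word r u \<Longrightarrow> g_sub_word r u"
  unfolding nminus_sub_word_def g_sub_word_def by fastforce

lemma filt_eq:
  assumes upo: "\<forall>j j'. rel r j i \<longrightarrow> idx_gt r j' j \<longrightarrow> rel r j' i"
    and cong: "\<forall>j j'. eqR r (fst j) (fst j') \<longrightarrow> eqR r (snd j) (snd j') \<longrightarrow> rel r j i \<longrightarrow> rel r j' i"
  shows "filt r m g_sub_word rel i = filt r m nminus_sub_word rel i"
proof -
  define P where "P = (\<lambda>j. rel r j i)"
  define Xw where "Xw = {fa_mult (fa_mult (fa_prod (map letter u)) (xr r S)) w_lambda | u S.
        g_sub_word r u \<and> in_Fr r S \<and> rel r (ell S, degs S) i}"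
  define Xu where "Xu = {fa_mult (fa_mult (fa_prod (map letter u)) (xr r S)) w_lambda | u S.
        nminus_sub_word r u \<and> in_Fr r S \<and> rel r (ell S, degs S) i}"
  have fw: "filt r m g_sub_word rel i = lspan (Xw \<union> Gs r m)"
    unfolding filt_def Xw_def weyl_sub_eq ..
  have fu: "filt r m nminus_sub_word rel i = lspan (Xu \<union> Gs r m)"
    unfolding filt_def Xu_def weyl_sub_eq ..
  have upP: "\<forall>j j'. P j \<longrightarrow> idx_gt r j' j \<longrightarrow> P j'" using upo unfolding P_def by blast
  have XuXw: "Xu \<subseteq> Xw" unfolding Xu_def Xw_def using nminus_g_sub by blast
  have Y_sub: "lspan (GenY r P \<union> Gs r m) \<subseteq> lspan (Xu \<union> Gs r m)"
  proof
    fix x assume x: "x \<in> lspan (GenY r P \<union> Gs r m)"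
    show "x \<in> lspan (Xu \<union> Gs r m)"
    proof (rule ls_subset[OF _ x], rule subsetI)
      fix y assume "y \<in> GenY r P \<union> Gs r m"
      then show "y \<in> lspan (Xu \<union> Gs r m)"
      proof
        assume "y \<in> Gs r m" then show ?thesis by (intro ls_gen UnI2)
      next
        assume "y \<in> GenY r P"
        then obtain v L where y: "y = word (v @ xw r L)" "nminus_sub_word r v" "validL r L" "P (idxL L)"
          unfolding GenY_def by blast
        define S where "S = SL L"
        have S: "in_Fr r S" "(ell S, degs S) = idxL L" using SL_props unfolding S_def by auto
        have rS: "rel r (ell S, degs S) i" using S(2) y(4) unfolding P_def by simp
        have "fa_mult (fa_mult (fa_prod (map letter v)) (xr r S)) w_lambda \<in> Xu"
          unfolding Xu_def using y(2) S(1) rS by blast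
        then have e: "word (v @ xw r (LS r S)) \<in> lspan (Xu \<union> Gs r m)"
          unfolding gen_elem by (intro ls_gen UnI1)
        have "word (v @ xw r L) - word (v @ xw r (LS r S)) \<in> lspan (Gs r m)"
          using perm_xr[OF y(3)] mset_LS_SL[OF y(3)] unfolding S_def by metis
        then have d: "word (v @ xw r L) - word (v @ xw r (LS r S)) \<in> lspan (Xu \<union> Gs r m)"
          by (rule ls_Un_right)
        have "y = (word (v @ xw r L) - word (v @ xw r (LS r S))) + word (v @ xw r (LS r S))"
          using y(1) by simp
        then show ?thesis using d e by (metis ls_add)
      qed
    qed
  qed
  have Xw_sub: "Xw \<union> Gs r m \<subseteq> lspan (Xu \<union> Gs r m)"
  proof
    fix y assume "y \<in> Xw \<union> Gs r m"
    then show "y \<in> lspan (Xu \<union> Gs r m)"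
    proof
      assume "y \<in> Gs r m" then show ?thesis by (intro ls_gen UnI2)
    next
      assume "y \<in> Xw"
      then obtain u S where y: "y = fa_mult (fa_mult (fa_prod (map letter u)) (xr r S)) w_lambda"
        "g_sub_word r u" "in_Fr r S" "rel r (ell S, degs S) i"
        unfolding Xw_def by blast
      have "P (idxL (LS r S))"
        using cong y(4) idx_LS[of r S] eqR_sym unfolding P_def by (metis fst_conv snd_conv)
      then have "word (u @ xw r (LS r S)) \<in> lspan (GenY r P \<union> Gs r m)"
        by (rule gword[OF upP y(2) validL_LS])
      then show ?thesis using Y_sub y(1) gen_elem by auto
    qed
  qed
  show ?thesis
  proof
    show "filt r m g_sub_word rel i \<subseteq> filt r m nminus_sub_word rel i"
      unfolding fw fu using ls_subset[OF Xw_sub] by blast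
    show "filt r m nminus_sub_word rel i \<subseteq> filt r m g_sub_word rel i"
      unfolding fw fu using ls_mono[of "Xu \<union> Gs r m" "Xw \<union> Gs r m"] XuXw by blast
  qed
qed

theorem proposition3p2:
  fixes r :: nat and m :: "nat \<Rightarrow> nat" and i :: "(nat \<Rightarrow> nat) \<times> (nat \<Rightarrow> nat)"
  assumes "r \<ge> 2"
  shows "W_ge r m i = Un_ge r m i \<and> W_gt r m i = Un_gt r m i"
proof
  show "W_ge r m i = Un_ge r m i"
  proof (rule filt_eq)
    show "\<forall>j j'. idx_ge r j i \<longrightarrow> idx_gt r j' j \<longrightarrow> idx_ge r j' i"
      using gt_ge unfolding idx_ge_def by blast
    show "\<forall>j j'. eqR r (fst j) (fst j') \<longrightarrow> eqR r (snd j) (snd j') \<longrightarrow> idx_ge r j i \<longrightarrow> idx_ge r j' i"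
      using ge_cong by blast
  qed
  show "W_gt r m i = Un_gt r m i"
  proof (rule filt_eq)
    show "\<forall>j j'. idx_gt r j i \<longrightarrow> idx_gt r j' j \<longrightarrow> idx_gt r j' i"
      using gt_gt by blast
    show "\<forall>j j'. eqR r (fst j) (fst j') \<longrightarrow> eqR r (snd j) (snd j') \<longrightarrow> idx_gt r j i \<longrightarrow> idx_gt r j' i"
      using gt_cong by blast
  qed
qed

end
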